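(* Let $M$ be a finite $\mathcal J$-above semigroup. Then $W(M^I)=\{m\in M^I:\mathcal L_m=\mathcal H_m\}$ is a union of $\mathcal J$-classes of $M^I$.
   Context: $M^I$ is $M$ with a new identity $I$ adjoined; $\mathcal L_m,\mathcal H_m$ denote the $\mathcal L$- and $\mathcal H$-classes of $m$ in $M^I$. A semigroup $M$ is finite $\mathcal J$-above if $\{y\in M: y\ge_{\mathcal J}x\}$ is finite for every $x\in M$. *)

theory Defs
  imports Main
begin

text \<open>The monoid M^I: M (a type of class semigroup_mult) with a new identity
  adjoined, represented as 'a option with None the adjoined identity I.\<close>

definition mulI :: "'a::semigroup_mult option \<Rightarrow> 'a option \<Rightarrow> 'a option" where
  "mulI x y = (case x of None \<Rightarrow> y
     | Some a \<Rightarrow> (case y of None \<Rightarrow> Some a | Some b \<Rightarrow> Some (a * b)))"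

definition L_rel :: "'a::semigroup_mult option \<Rightarrow> 'a option \<Rightarrow> bool" where
  "L_rel x y \<longleftrightarrow> (\<exists>s. mulI s x = y) \<and> (\<exists>s. mulI s y = x)"

definition R_rel :: "'a::semigroup_mult option \<Rightarrow> 'a option \<Rightarrow> bool" where
  "R_rel x y \<longleftrightarrow> (\<exists>s. mulI x s = y) \<and> (\<exists>s. mulI y s = x)"

definition H_rel :: "'a::semigroup_mult option \<Rightarrow> 'a option \<Rightarrow> bool" where
  "H_rel x y \<longleftrightarrow> L_rel x y \<and> R_rel x y"

definition J_le :: "'a::semigroup_mult option \<Rightarrow> 'a option \<Rightarrow> bool" where
  "J_le x y \<longleftrightarrow> (\<exists>s t. x = mulI (mulI s y) t)"

definition J_rel :: "'a::semigroup_mult option \<Rightarrow> 'a option \<Rightarrow> bool" where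
  "J_rel x y \<longleftrightarrow> J_le x y \<and> J_le y x"

definition L_class :: "'a::semigroup_mult option \<Rightarrow> 'a option set" where
  "L_class m = {x. L_rel x m}"

definition H_class :: "'a::semigroup_mult option \<Rightarrow> 'a option set" where
  "H_class m = {x. H_rel x m}"

text \<open>M finite J-above: for each x in M, {y in M. y \<ge>_J x} is finite.
  (For elements of M, \<le>_J in M coincides with \<le>_J in M^I.)\<close>
definition finite_J_above :: "'a::semigroup_mult itself \<Rightarrow> bool" where
  "finite_J_above _ \<longleftrightarrow> (\<forall>x::'a. finite {y::'a. J_le (Some x) (Some y)})"

definition W_set :: "'a::semigroup_mult option set" where
  "W_set = {m. L_class m = H_class m}"

end

theory Submission
  imports Defs
begin

lemma mulI_assoc: "mulI (mulI x y) z = mulI x (mulI y z)"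
  by (simp add: mulI_def mult.assoc split: option.splits)

lemma mulI_None1[simp]: "mulI None x = x" by (simp add: mulI_def)
lemma mulI_None2[simp]: "mulI x None = x" by (simp add: mulI_def split: option.splits)
lemma mulI_Some: "\<exists>c. mulI (Some a) y = Some c" by (simp add: mulI_def split: option.splits)

declare mulI_assoc[simp]

fun pw :: "'a::semigroup_mult option \<Rightarrow> nat \<Rightarrow> 'a option" where
  "pw b 0 = None" | "pw b (Suc k) = mulI b (pw b k)"

lemma pw_comm: "mulI (pw b k) b = mulI b (pw b k)"
  by (induction k) auto

lemma pw_Suc2: "pw b (Suc k) = mulI (pw b k) b"
  by (simp add: pw_comm)

lemma pw_add: "pw b (i + d) = mulI (pw b i) (pw b d)"
  by (induction i) auto

lemma pigeon:
  assumes "finite S" "\<forall>k::nat. F k \<in> S"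
  shows "\<exists>i j. i < j \<and> F i = F j"
proof -
  have "range F \<subseteq> S" using assms(2) by blast
  hence "finite (range F)" using assms(1) by (rule finite_subset)
  hence "\<not> inj F" using finite_imageD[of F UNIV] by auto
  then obtain i j where "i \<noteq> j" "F i = F j" unfolding inj_def by blast
  thus ?thesis by (metis linorder_neqE_nat)
qed

lemma iter:
  assumes "x = mulI (mulI a x) b"
  shows "x = mulI (pw a k) (mulI x (pw b k))"
proof (induction k)
  case 0 then show ?case by simp
next
  case (Suc k)
  have "x = mulI (pw a k) (mulI x (pw b k))" by fact
  also have "\<dots> = mulI (pw a k) (mulI (mulI (mulI a x) b) (pw b k))"
    using assms by metis
  also have "\<dots> = mulI (mulI (pw a k) a) (mulI x (mulI b (pw b k)))" by simp
  finally show ?case by (simp add: pw_comm)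
qed

lemma key:
  assumes fin: "finite_J_above TYPE('a::semigroup_mult)"
    and x: "(x::'a option) = mulI (mulI a x) b"
  shows "(\<exists>d>0. x = mulI x (pw b d)) \<and> (\<exists>d>0. x = mulI (pw a d) x)"
proof (cases x)
  case None
  with x have "mulI a b = None" by simp
  hence "a = None" "b = None" by (auto simp: mulI_def split: option.splits)
  then show ?thesis using None by (auto intro: exI[of _ 1])
next
  case (Some c)
  let ?S = "Some ` {y. J_le (Some c) (Some y)}"
  have finS: "finite ?S" using fin unfolding finite_J_above_def by blast
  have it: "\<And>k. x = mulI (pw a k) (mulI x (pw b k))" using iter[OF x] by blast
  have A: "\<forall>k. mulI x (pw b k) \<in> ?S"
  proof
    fix k
    obtain e where e: "mulI x (pw b k) = Some e" using mulI_Some Some by metis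
    have "J_le (Some c) (Some e)" unfolding J_le_def using it[of k] e Some
      by (metis mulI_None2)
    thus "mulI x (pw b k) \<in> ?S" using e by blast
  qed
  have B: "\<forall>k. mulI (pw a k) x \<in> ?S"
  proof
    fix k
    have "\<exists>e. mulI (pw a k) x = Some e" using Some
      by (cases "pw a k") (auto simp: mulI_def)
    then obtain e where e: "mulI (pw a k) x = Some e" by blast
    have "J_le (Some c) (Some e)" unfolding J_le_def using it[of k] e Some
      by (metis mulI_assoc)
    thus "mulI (pw a k) x \<in> ?S" using e by blast
  qed
  obtain i j where ij: "i < j" "mulI x (pw b i) = mulI x (pw b j)"
    using pigeon[OF finS A] by blast
  obtain d where d: "j = i + d" "d > 0" using ij(1) less_imp_add_positive by blast
  have "x = mulI (pw a i) (mulI x (pw b j))" using it[of i] ij(2) by simp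
  also have "\<dots> = mulI (mulI (pw a i) (mulI x (pw b i))) (pw b d)" by (simp add: d pw_add)
  also have "\<dots> = mulI x (pw b d)" using it[of i] by simp
  finally have R: "x = mulI x (pw b d)" .
  obtain i' j' where ij': "i' < j'" "mulI (pw a i') x = mulI (pw a j') x"
    using pigeon[OF finS B] by blast
  obtain d' where d': "j' = d' + i'" "d' > 0" using ij'(1)
    by (metis add.commute less_imp_add_positive)
  have x1: "x = mulI (mulI (pw a i') x) (pw b i')" using it[of i'] by (simp only: mulI_assoc)
  have "x = mulI (mulI (pw a j') x) (pw b i')" using x1 ij'(2) by (simp only:)
  also have "\<dots> = mulI (pw a d') (mulI (mulI (pw a i') x) (pw b i'))" by (simp add: d' pw_add)
  also have "\<dots> = mulI (pw a d') x" using it[of i'] by simp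
  finally have L: "x = mulI (pw a d') x" .
  show ?thesis using R L d d' by blast
qed

lemma stabR:
  assumes fin: "finite_J_above TYPE('a::semigroup_mult)"
    and j: "J_le (x::'a option) (mulI x y)"
  shows "R_rel x (mulI x y)"
proof -
  obtain s t where st: "x = mulI (mulI s (mulI x y)) t" using j unfolding J_le_def by blast
  hence "x = mulI (mulI s x) (mulI y t)" by simp
  then obtain d where d: "d > 0" "x = mulI x (pw (mulI y t) d)" using key[OF fin] by blast
  then obtain e where "d = Suc e" using gr0_conv_Suc by blast
  with d have "x = mulI (mulI x y) (mulI t (pw (mulI y t) e))" by simp
  thus ?thesis unfolding R_rel_def by metis
qed

lemma stabL:
  assumes fin: "finite_J_above TYPE('a::semigroup_mult)"
    and j: "J_le (x::'a option) (mulI y x)"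
  shows "L_rel x (mulI y x)"
proof -
  obtain s t where st: "x = mulI (mulI s (mulI y x)) t" using j unfolding J_le_def by blast
  hence "x = mulI (mulI (mulI s y) x) t" by simp
  then obtain d where d: "d > 0" "x = mulI (pw (mulI s y) d) x" using key[OF fin] by blast
  then obtain e where "d = Suc e" using gr0_conv_Suc by blast
  with d have "x = mulI (mulI (pw (mulI s y) e) s) (mulI y x)"
    by (simp add: pw_Suc2 del: pw.simps)
  thus ?thesis unfolding L_rel_def by metis
qed

theorem lemma8p4:
  assumes "finite_J_above TYPE('a::semigroup_mult)"
  shows "\<forall>m n :: 'a option. m \<in> W_set \<and> J_rel m n \<longrightarrow> n \<in> W_set"
proof (intro allI impI)
  fix m n :: "'a option"
  assume h: "m \<in> W_set \<and> J_rel m n"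
  have W: "\<And>x. L_rel x m \<Longrightarrow> R_rel x m"
  proof -
    fix x assume "L_rel x m"
    hence "x \<in> L_class m" by (simp add: L_class_def)
    hence "x \<in> H_class m" using h by (simp add: W_set_def)
    thus "R_rel x m" by (simp add: H_class_def H_rel_def)
  qed
  obtain s t where n: "n = mulI (mulI s m) t" using h unfolding J_rel_def J_le_def by blast
  obtain u v where m: "m = mulI (mulI u n) v" using h unfolding J_rel_def J_le_def by blast
  define p where "p = mulI m t"
  have "J_le m p" unfolding J_le_def p_def
    by (rule exI[of _ "mulI u s"], rule exI[of _ v]) (subst m, simp add: n)
  hence Rmp: "R_rel m p" unfolding p_def using stabR[OF assms] by blast
  have np: "n = mulI s p" by (simp add: n p_def)
  have "J_le p n" unfolding J_le_def p_def
    by (rule exI[of _ u], rule exI[of _ "mulI v t"]) (subst m, simp)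
  hence Lpn: "L_rel p n" using stabL[OF assms] np by blast
  obtain t' where t': "m = mulI p t'" using Rmp unfolding R_rel_def by metis
  have claim: "R_rel y p" if Ly: "L_rel y p" for y
  proof -
    obtain w where w: "y = mulI w p" using Ly unfolding L_rel_def by metis
    obtain w' where w': "p = mulI w' y" using Ly unfolding L_rel_def by metis
    define z where "z = mulI y t'"
    have zm: "z = mulI w m" by (simp add: z_def w t')
    have "m = mulI w' z" unfolding z_def using t' w' by simp
    hence "L_rel z m" using zm unfolding L_rel_def by metis
    hence "R_rel z m" by (rule W)
    then obtain c c' where c: "m = mulI z c" "z = mulI m c'" unfolding R_rel_def by metis
    have yz: "y = mulI z t" by (simp add: zm p_def w)
    have "y = mulI p (mulI t' (mulI c' t))" using yz c(2) t' by simp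
    moreover have "p = mulI y (mulI t' (mulI c t))" using c(1) z_def p_def by simp
    ultimately show ?thesis unfolding R_rel_def by metis
  qed
  have Lsym: "L_rel a b \<Longrightarrow> L_rel b a" for a b :: "'a option" unfolding L_rel_def by blast
  have Ltr: "L_rel a b \<Longrightarrow> L_rel b c \<Longrightarrow> L_rel a c" for a b c :: "'a option"
    unfolding L_rel_def by (metis (no_types) mulI_assoc)
  have Rsym: "R_rel a b \<Longrightarrow> R_rel b a" for a b :: "'a option" unfolding R_rel_def by blast
  have Rtr: "R_rel a b \<Longrightarrow> R_rel b c \<Longrightarrow> R_rel a c" for a b c :: "'a option"
    unfolding R_rel_def by (metis mulI_assoc)
  have Rnp: "R_rel n p" using claim Lpn Lsym by blast
  have "\<forall>y. L_rel y n \<longleftrightarrow> H_rel y n"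
  proof (intro allI iffI)
    fix y assume "L_rel y n"
    hence "R_rel y p" using claim Ltr Lsym Lpn by blast
    hence "R_rel y n" using Rnp Rsym Rtr by blast
    thus "H_rel y n" using \<open>L_rel y n\<close> by (simp add: H_rel_def)
  qed (simp add: H_rel_def)
  thus "n \<in> W_set" by (simp add: W_set_def L_class_def H_class_def)
qed

end
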